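(* Let $(J,\mathcal F)$, $b^S,w^S_j$, $P(\mathcal F)$ be as in the context with $P(\mathcal F)$ an $\mathcal F$-extended polymatroid, and let $\mathbf c$ be $\mathcal F$-admissible, with $\mathrm{AG}_2$ on input $\mathbf c$ producing $\boldsymbol\pi,\boldsymbol\nu$ and $S_k=\{\pi_k,\dots,\pi_n\}$. Define $c^{S_1}_j=c_j$ ($j\in J$) and $c^{S_k}_j=c^{S_{k-1}}_j-\frac{c^{S_{k-1}}_{\pi_{k-1}}}{w^{S_{k-1}}_{\pi_{k-1}}}[w^{S_{k-1}}_j-w^{S_k}_j]$ for $j\in S_k$, $2\le k\le n$, and let $v^{\mathrm{LP}}=\min\{\sum_jc_jx_j:\mathbf x\in P(\mathcal F)\}$. Then for $1\le m\le n-1$, $$v^{\mathrm{LP}}=\sum_{k=1}^m\nu_{\pi_k}\,[b^{S_k}-b^{S_{k+1}}]+\sum_{j\in S_{m+1}}c^{S_{m+1}}_j\,x^{\boldsymbol\pi}_j.$$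
   Context: $J$ finite, $|J|=n$; $\mathcal F\subseteq2^J$ with $\emptyset\in\mathcal F$, each nonempty $S\in\mathcal F$ having nonempty $\partial^-S=\{j\in S:S\setminus\{j\}\in\mathcal F\}$, each $S\in\mathcal F\ne J$ having $j\notin S$ with $S\cup\{j\}\in\mathcal F$. Full $\mathcal F$-string: ordering $\boldsymbol\pi$ of $J$ with $\{\pi_k,\dots,\pi_n\}\in\mathcal F$ for all $k$. Given $b^S\ge0$, $w^S_j>0$: $P(\mathcal F)=\{\mathbf x\ge0:\sum_{j\in S}w^S_jx_j\ge b^S\ (S\in\mathcal F\setminus\{J\}),\ \sum_{j\in J}w^J_jx_j=b^J\}$; $\mathbf x^{\boldsymbol\pi}$ is the unique solution of $\sum_{l=k}^nw^{S_k}_{\pi_l}x_{\pi_l}=b^{S_k}$ ($1\le k\le n$); $P(\mathcal F)$ is an $\mathcal F$-extended polymatroid if $\mathbf x^{\boldsymbol\pi}\in P(\mathcal F)$ for every full $\mathcal F$-string. $\mathrm{AG}_2$ on input $\mathbf c$: $S_1=J$, $\nu^{S_1}_j=c_j/w^{S_1}_j$, $\pi_1\in\arg\min\{\nu^{S_1}_j:j\in\partial^-S_1\}$, $\nu_{\pi_1}=\nu^{S_1}_{\pi_1}$; for $k=2..n$: $S_k=S_{k-1}\setminus\{\pi_{k-1}\}$, $\nu^{S_k}_j=\nu^{S_{k-1}}_j+(w^{S_{k-1}}_j/w^{S_k}_j-1)[\nu^{S_{k-1}}_j-\nu^{S_{k-1}}_{\pi_{k-1}}]$ ($j\in S_k$),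 $\pi_k\in\arg\min\{\nu^{S_k}_j:j\in\partial^-S_k\}$, $\nu_{\pi_k}=\nu^{S_k}_{\pi_k}$. $\mathbf c$ is $\mathcal F$-admissible if $\nu_{\pi_1}\le\cdots\le\nu_{\pi_n}$. *)

theory Defs
  imports Main "HOL-Library.FuncSet" Complex_Main
begin

definition lower_bd :: "'a set set \<Rightarrow> 'a set \<Rightarrow> 'a set" where
  "lower_bd F S = {j \<in> S. S - {j} \<in> F}"

definition feasible_family :: "'a set \<Rightarrow> 'a set set \<Rightarrow> bool" where
  "feasible_family J F \<longleftrightarrow> finite J \<and> F \<subseteq> Pow J \<and> {} \<in> F
     \<and> (\<forall>S\<in>F. S \<noteq> {} \<longrightarrow> lower_bd F S \<noteq> {})
     \<and> (\<forall>S\<in>F. S \<noteq> J \<longrightarrow> (\<exists>j. j \<notin> S \<and> j \<in> J \<and> insert j S \<in> F))"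

definition Sk :: "(nat \<Rightarrow> 'a) \<Rightarrow> nat \<Rightarrow> nat \<Rightarrow> 'a set" where
  "Sk \<pi> n k = \<pi> ` {k..n}"

definition full_string :: "'a set \<Rightarrow> 'a set set \<Rightarrow> (nat \<Rightarrow> 'a) \<Rightarrow> bool" where
  "full_string J F \<pi> \<longleftrightarrow> bij_betw \<pi> {1..card J} J
     \<and> (\<forall>k\<in>{1..card J}. Sk \<pi> (card J) k \<in> F)"

definition polyP :: "'a set \<Rightarrow> 'a set set \<Rightarrow> ('a set \<Rightarrow> real) \<Rightarrow> ('a set \<Rightarrow> 'a \<Rightarrow> real)
    \<Rightarrow> ('a \<Rightarrow> real) set" where
  "polyP J F b w = {x. (\<forall>j\<in>J. 0 \<le> x j)
      \<and> (\<forall>S\<in>F - {J}. (\<Sum>j\<in>S. w S j * x j) \<ge> b S)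
      \<and> (\<Sum>j\<in>J. w J j * x j) = b J}"

definition xpi :: "'a set \<Rightarrow> ('a set \<Rightarrow> real) \<Rightarrow> ('a set \<Rightarrow> 'a \<Rightarrow> real) \<Rightarrow> (nat \<Rightarrow> 'a)
    \<Rightarrow> ('a \<Rightarrow> real)" where
  "xpi J b w \<pi> = (THE x. (\<forall>k\<in>{1..card J}.
        (\<Sum>l=k..card J. w (Sk \<pi> (card J) k) (\<pi> l) * x (\<pi> l)) = b (Sk \<pi> (card J) k))
      \<and> (\<forall>j. j \<notin> J \<longrightarrow> x j = 0))"

definition ext_polymatroid :: "'a set \<Rightarrow> 'a set set \<Rightarrow> ('a set \<Rightarrow> real) \<Rightarrow> ('a set \<Rightarrow> 'a \<Rightarrow> real) \<Rightarrow> bool" where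
  "ext_polymatroid J F b w \<longleftrightarrow> (\<forall>\<pi>. full_string J F \<pi> \<longrightarrow> xpi J b w \<pi> \<in> polyP J F b w)"

text \<open>Indices nu^{S_k}_j of algorithm AG_2 along the ordering pi (argument k is the step, k >= 1;
  value at k = 0 is a dummy copy of step 1).\<close>

fun agnu :: "('a set \<Rightarrow> 'a \<Rightarrow> real) \<Rightarrow> ('a \<Rightarrow> real) \<Rightarrow> (nat \<Rightarrow> 'a) \<Rightarrow> nat \<Rightarrow> nat \<Rightarrow> 'a \<Rightarrow> real" where
  "agnu w c \<pi> n 0 j = c j / w (Sk \<pi> n 1) j"
| "agnu w c \<pi> n (Suc 0) j = c j / w (Sk \<pi> n 1) j"
| "agnu w c \<pi> n (Suc (Suc k)) j =
     agnu w c \<pi> n (Suc k) j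
     + (w (Sk \<pi> n (Suc k)) j / w (Sk \<pi> n (Suc (Suc k))) j - 1)
       * (agnu w c \<pi> n (Suc k) j - agnu w c \<pi> n (Suc k) (\<pi> (Suc k)))"

text \<open>pi is a possible output ordering of AG_2 on input c (ties broken arbitrarily).\<close>

definition AG2_run :: "'a set \<Rightarrow> 'a set set \<Rightarrow> ('a set \<Rightarrow> 'a \<Rightarrow> real) \<Rightarrow> ('a \<Rightarrow> real)
    \<Rightarrow> (nat \<Rightarrow> 'a) \<Rightarrow> bool" where
  "AG2_run J F w c \<pi> \<longleftrightarrow> bij_betw \<pi> {1..card J} J
     \<and> (\<forall>k\<in>{1..card J}. \<pi> k \<in> lower_bd F (Sk \<pi> (card J) k)
          \<and> (\<forall>j\<in>lower_bd F (Sk \<pi> (card J) k).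
               agnu w c \<pi> (card J) k (\<pi> k) \<le> agnu w c \<pi> (card J) k j))"

definition AG2_nu :: "'a set \<Rightarrow> ('a set \<Rightarrow> 'a \<Rightarrow> real) \<Rightarrow> ('a \<Rightarrow> real) \<Rightarrow> (nat \<Rightarrow> 'a) \<Rightarrow> nat \<Rightarrow> real" where
  "AG2_nu J w c \<pi> k = agnu w c \<pi> (card J) k (\<pi> k)"

definition admissible_run :: "'a set \<Rightarrow> 'a set set \<Rightarrow> ('a set \<Rightarrow> 'a \<Rightarrow> real) \<Rightarrow> ('a \<Rightarrow> real)
    \<Rightarrow> (nat \<Rightarrow> 'a) \<Rightarrow> bool" where
  "admissible_run J F w c \<pi> \<longleftrightarrow> AG2_run J F w c \<pi>
     \<and> (\<forall>k\<in>{1..<card J}. AG2_nu J w c \<pi> k \<le> AG2_nu J w c \<pi> (Suc k))"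

fun redc :: "('a set \<Rightarrow> 'a \<Rightarrow> real) \<Rightarrow> ('a \<Rightarrow> real) \<Rightarrow> (nat \<Rightarrow> 'a) \<Rightarrow> nat \<Rightarrow> nat \<Rightarrow> 'a \<Rightarrow> real" where
  "redc w c \<pi> n 0 j = c j"
| "redc w c \<pi> n (Suc 0) j = c j"
| "redc w c \<pi> n (Suc (Suc k)) j =
     redc w c \<pi> n (Suc k) j
     - redc w c \<pi> n (Suc k) (\<pi> (Suc k)) / w (Sk \<pi> n (Suc k)) (\<pi> (Suc k))
       * (w (Sk \<pi> n (Suc k)) j - w (Sk \<pi> n (Suc (Suc k))) j)"

definition vLP :: "'a set \<Rightarrow> 'a set set \<Rightarrow> ('a set \<Rightarrow> real) \<Rightarrow> ('a set \<Rightarrow> 'a \<Rightarrow> real)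
    \<Rightarrow> ('a \<Rightarrow> real) \<Rightarrow> real" where
  "vLP J F b w c = Inf ((\<lambda>x. \<Sum>j\<in>J. c j * x j) ` polyP J F b w)"

end

theory Submission
  imports Defs
begin


lemma J_in_F:
  assumes fam: "feasible_family J F"
  shows "J \<in> F"
proof -
  have fin: "finite J" and sub: "F \<subseteq> Pow J" and e: "{} \<in> F"
    and ext: "\<forall>S\<in>F. S \<noteq> J \<longrightarrow> (\<exists>j. j \<notin> S \<and> j \<in> J \<and> insert j S \<in> F)"
    using fam unfolding feasible_family_def by auto
  have "\<forall>S. S \<in> F \<longrightarrow> card (J - S) = d \<longrightarrow> J \<in> F" for d
  proof (induction d)
    case 0
    then show ?case using fin sub by (metis Diff_eq_empty_iff PowD card_0_eq finite_Diff subset_antisym subsetD)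
  next
    case (Suc d)
    show ?case
    proof (intro allI impI)
      fix S assume S: "S \<in> F" "card (J - S) = Suc d"
      then have "S \<noteq> J" by auto
      then obtain j where j: "j \<notin> S" "j \<in> J" "insert j S \<in> F" using ext S by blast
      have "J - insert j S = (J - S) - {j}" by auto
      then have "card (J - insert j S) = d" using S j fin by (simp add: card_Diff_singleton)
      then show "J \<in> F" using Suc.IH j by blast
    qed
  qed
  then show ?thesis using e by blast
qed

lemma abel:
  fixes nu A :: "nat \<Rightarrow> real"
  shows "(\<Sum>k=1..Suc p. nu k * (A k - A (Suc k))) =
     nu 1 * A 1 + (\<Sum>k=2..Suc p. (nu k - nu (k - 1)) * A k) - nu (Suc p) * A (Suc (Suc p))"
proof (induction p)
  case 0 then show ?case by (simp add: algebra_simps)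
next
  case (Suc p)
  have "(\<Sum>k=1..Suc (Suc p). nu k * (A k - A (Suc k))) = (\<Sum>k=1..Suc p. nu k * (A k - A (Suc k))) + nu (Suc (Suc p)) * (A (Suc (Suc p)) - A (Suc (Suc (Suc p))))"
    by simp
  also have "(\<Sum>k=2..Suc (Suc p). (nu k - nu (k - 1)) * A k) = (\<Sum>k=2..Suc p. (nu k - nu (k - 1)) * A k) + (nu (Suc (Suc p)) - nu (Suc p)) * A (Suc (Suc p))"
    by simp
  ultimately show ?case using Suc.IH by (simp add: algebra_simps)
qed

locale P1 =
  fixes J :: "'a set" and F :: "'a set set" and b :: "'a set \<Rightarrow> real"
    and w :: "'a set \<Rightarrow> 'a \<Rightarrow> real" and c :: "'a \<Rightarrow> real" and \<pi> :: "nat \<Rightarrow> 'a"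
  assumes fam: "feasible_family J F"
    and w_pos: "\<And>S j. S \<in> F \<Longrightarrow> j \<in> S \<Longrightarrow> 0 < w S j"
    and adm: "admissible_run J F w c \<pi>"
begin

abbreviation "n \<equiv> card J"
abbreviation "S k \<equiv> Sk \<pi> n k"

lemma bij: "bij_betw \<pi> {1..n} J" using adm unfolding admissible_run_def AG2_run_def by auto
lemma finJ: "finite J" using fam unfolding feasible_family_def by auto
lemma inj: "inj_on \<pi> {1..n}" using bij bij_betw_imp_inj_on by blast
lemma piJ: "k \<in> {1..n} \<Longrightarrow> \<pi> k \<in> J" using bij bij_betwE by blast
lemma S1: "S 1 = J" unfolding Sk_def using bij bij_betw_imp_surj_on by blast
lemma Sempty: "S (Suc n) = {}" unfolding Sk_def by simp
lemma S_insert: "1 \<le> k \<Longrightarrow> k \<le> n \<Longrightarrow> S k = insert (\<pi> k) (S (Suc k))"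
  unfolding Sk_def by (metis Icc_eq_insert_lb_nat image_insert)
lemma S_notin: "1 \<le> k \<Longrightarrow> k \<le> n \<Longrightarrow> \<pi> k \<notin> S (Suc k)"
proof
  assume k: "1 \<le> k" "k \<le> n" "\<pi> k \<in> S (Suc k)"
  then obtain l where l: "l \<in> {Suc k..n}" "\<pi> l = \<pi> k" unfolding Sk_def by auto
  then have "l = k" using inj k unfolding inj_on_def by (metis atLeastAtMost_iff Suc_leD order_trans)
  then show False using l by simp
qed
lemma S_sub: "1 \<le> k \<Longrightarrow> S k \<subseteq> J" unfolding Sk_def using piJ by auto
lemma S_mono: "S (Suc k) \<subseteq> S k" unfolding Sk_def by auto
lemma SF: "1 \<le> k \<Longrightarrow> k \<le> Suc n \<Longrightarrow> S k \<in> F"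
proof (cases k)
  case 0 then show ?thesis if "1 \<le> k" using that by simp
next
  case (Suc k')
  assume k: "1 \<le> k" "k \<le> Suc n"
  show ?thesis
  proof (cases k')
    case 0 then show ?thesis using Suc S1 J_in_F[OF fam] by simp
  next
    case (Suc k'')
    then have k': "k' \<in> {1..n}" using k \<open>k = Suc k'\<close> by auto
    then have "\<pi> k' \<in> lower_bd F (S k')" using adm unfolding admissible_run_def AG2_run_def by blast
    then have "S k' - {\<pi> k'} \<in> F" unfolding lower_bd_def by auto
    moreover have "S k' - {\<pi> k'} = S (Suc k')" using S_insert S_notin k' by auto
    ultimately show ?thesis using \<open>k = Suc k'\<close> by simp
  qed
qed
lemma SnJ: "2 \<le> k \<Longrightarrow> k \<le> n \<Longrightarrow> S k \<noteq> J"
proof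
  assume k: "2 \<le> k" "k \<le> n" "S k = J"
  then have "\<pi> 1 \<in> S k" using piJ by auto
  then obtain l where "l \<in> {k..n}" "\<pi> l = \<pi> 1" unfolding Sk_def by auto
  then show False using inj k unfolding inj_on_def by fastforce
qed
lemma wpos: "1 \<le> k \<Longrightarrow> k \<le> n \<Longrightarrow> j \<in> S k \<Longrightarrow> 0 < w (S k) j"
  using SF w_pos by auto

end

context P1 begin

lemma key: "k < n \<Longrightarrow> j \<in> S (Suc k) \<Longrightarrow>
   redc w c \<pi> n (Suc k) j = agnu w c \<pi> n (Suc k) j * w (S (Suc k)) j"
proof (induction k arbitrary: j)
  case 0
  have "0 < w (S 1) j" using wpos[of 1 j] 0 by simp
  then show ?case by simp
next
  case (Suc k)
  let ?a = "S (Suc k)" and ?b = "S (Suc (Suc k))"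
  have jb: "j \<in> ?b" using Suc.prems by simp
  have ja: "j \<in> ?a" using jb S_mono by blast
  have pa: "\<pi> (Suc k) \<in> ?a" using S_insert[of "Suc k"] Suc.prems by auto
  have wa: "0 < w ?a j" using wpos[of "Suc k" j] ja Suc.prems by simp
  have wb: "0 < w ?b j" using wpos[of "Suc (Suc k)" j] jb Suc.prems by simp
  have wp: "0 < w ?a (\<pi> (Suc k))" using wpos[of "Suc k"] pa Suc.prems by simp
  have i1: "redc w c \<pi> n (Suc k) j = agnu w c \<pi> n (Suc k) j * w ?a j"
    using Suc.IH[OF _ ja] Suc.prems by simp
  have i2: "redc w c \<pi> n (Suc k) (\<pi> (Suc k)) = agnu w c \<pi> n (Suc k) (\<pi> (Suc k)) * w ?a (\<pi> (Suc k))"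
    using Suc.IH[OF _ pa] Suc.prems by simp
  show ?case using wa wb wp
    by (simp add: i1 i2 field_simps)
qed

lemma nu_eq: "1 \<le> k \<Longrightarrow> k \<le> n \<Longrightarrow>
   redc w c \<pi> n k (\<pi> k) / w (S k) (\<pi> k) = AG2_nu J w c \<pi> k"
proof -
  assume k: "1 \<le> k" "k \<le> n"
  then obtain k' where k': "k = Suc k'" "k' < n" by (cases k) auto
  have p: "\<pi> k \<in> S k" using S_insert k by auto
  have "0 < w (S k) (\<pi> k)" using wpos k p by auto
  then show ?thesis using key[OF k'(2), of "\<pi> k"] p k' unfolding AG2_nu_def by simp
qed

definition A :: "('a \<Rightarrow> real) \<Rightarrow> nat \<Rightarrow> real" where
  "A x k = (\<Sum>j\<in>S k. w (S k) j * x j)"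

lemma main_id: "m \<le> n \<Longrightarrow> (\<Sum>j\<in>J. c j * x j) =
   (\<Sum>k=1..m. AG2_nu J w c \<pi> k * (A x k - A x (Suc k)))
   + (\<Sum>j\<in>S (Suc m). redc w c \<pi> n (Suc m) j * x j)"
proof (induction m)
  case 0 then show ?case using S1 by simp
next
  case (Suc m)
  let ?nu = "AG2_nu J w c \<pi> (Suc m)"
  let ?a = "S (Suc m)" and ?b = "S (Suc (Suc m))"
  have fin: "finite ?b" unfolding Sk_def by simp
  have ins: "?a = insert (\<pi> (Suc m)) ?b" using S_insert[of "Suc m"] Suc.prems by simp
  have notin: "\<pi> (Suc m) \<notin> ?b" using S_notin[of "Suc m"] Suc.prems by simp
  have nu: "redc w c \<pi> n (Suc m) (\<pi> (Suc m)) = ?nu * w ?a (\<pi> (Suc m))"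
  proof -
    have p: "\<pi> (Suc m) \<in> ?a" using ins by auto
    have "0 < w ?a (\<pi> (Suc m))" using wpos[of "Suc m"] p Suc.prems by simp
    then show ?thesis using nu_eq[of "Suc m"] Suc.prems by (simp add: field_simps)
  qed
  have rc: "redc w c \<pi> n (Suc m) j = redc w c \<pi> n (Suc (Suc m)) j + ?nu * (w ?a j - w ?b j)" for j
  proof -
    have p: "\<pi> (Suc m) \<in> ?a" using ins by auto
    have "0 < w ?a (\<pi> (Suc m))" using wpos[of "Suc m"] p Suc.prems by simp
    then show ?thesis using nu by simp
  qed
  have "(\<Sum>j\<in>?a. redc w c \<pi> n (Suc m) j * x j)
     = ?nu * w ?a (\<pi> (Suc m)) * x (\<pi> (Suc m)) + (\<Sum>j\<in>?b. redc w c \<pi> n (Suc m) j * x j)"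
    using ins notin fin nu by (simp del: redc.simps)
  also have "(\<Sum>j\<in>?b. redc w c \<pi> n (Suc m) j * x j) =
      ?nu * (\<Sum>j\<in>?b. w ?a j * x j) - ?nu * (\<Sum>j\<in>?b. w ?b j * x j) + (\<Sum>j\<in>?b. redc w c \<pi> n (Suc (Suc m)) j * x j)"
  proof -
    have "(\<Sum>j\<in>?b. redc w c \<pi> n (Suc m) j * x j) = (\<Sum>j\<in>?b. ?nu * (w ?a j * x j) - ?nu * (w ?b j * x j) + redc w c \<pi> n (Suc (Suc m)) j * x j)"
      by (rule sum.cong) (simp_all add: rc algebra_simps del: redc.simps)
    also have "\<dots> = ?nu * (\<Sum>j\<in>?b. w ?a j * x j) - ?nu * (\<Sum>j\<in>?b. w ?b j * x j) + (\<Sum>j\<in>?b. redc w c \<pi> n (Suc (Suc m)) j * x j)"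
      by (simp only: sum.distrib sum_subtractf sum_distrib_left)
    finally show ?thesis .
  qed
  also have "A x (Suc m) = w ?a (\<pi> (Suc m)) * x (\<pi> (Suc m)) + (\<Sum>j\<in>?b. w ?a j * x j)"
    unfolding A_def using ins notin fin by simp
  ultimately show ?case using Suc.IH Suc.prems unfolding A_def by (simp add: algebra_simps del: redc.simps)
qed

end

context P1 begin

definition E :: "('a \<Rightarrow> real) \<Rightarrow> bool" where
  "E x \<longleftrightarrow> (\<forall>k\<in>{1..n}. (\<Sum>l=k..n. w (S k) (\<pi> l) * x (\<pi> l)) = b (S k)) \<and> (\<forall>j. j \<notin> J \<longrightarrow> x j = 0)"

lemma A_alt: "1 \<le> k \<Longrightarrow> A x k = (\<Sum>l=k..n. w (S k) (\<pi> l) * x (\<pi> l))"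
proof -
  assume k: "1 \<le> k"
  have "{k..n} \<subseteq> {1..n}" using k by auto
  then have "inj_on \<pi> {k..n}" using inj inj_on_subset by blast
  then show ?thesis unfolding A_def Sk_def by (simp add: sum.reindex)
qed

lemma ex_part: "i \<le> n \<Longrightarrow> \<exists>x. \<forall>k\<in>{n - i + 1..n}. (\<Sum>l=k..n. w (S k) (\<pi> l) * x (\<pi> l)) = b (S k)"
proof (induction i)
  case 0 then show ?case by auto
next
  case (Suc i)
  then obtain x where x: "\<forall>k\<in>{n - i + 1..n}. (\<Sum>l=k..n. w (S k) (\<pi> l) * x (\<pi> l)) = b (S k)" by auto
  define k0 where "k0 = n - i"
  have k0: "1 \<le> k0" "k0 \<le> n" using Suc.prems unfolding k0_def by auto
  define v where "v = (b (S k0) - (\<Sum>l=Suc k0..n. w (S k0) (\<pi> l) * x (\<pi> l))) / w (S k0) (\<pi> k0)"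
  define x' where "x' = x(\<pi> k0 := v)"
  have same: "x' (\<pi> l) = x (\<pi> l)" if "l \<in> {Suc k0..n}" for l
  proof -
    have "\<pi> l \<noteq> \<pi> k0" using inj that k0 unfolding inj_on_def
      by (metis Suc_n_not_le_n atLeastAtMost_iff order_trans le_SucI)
    then show ?thesis unfolding x'_def by simp
  qed
  have wp: "0 < w (S k0) (\<pi> k0)" using wpos[OF k0] S_insert[OF k0] by auto
  show ?case
  proof (intro exI ballI)
    fix k assume k: "k \<in> {n - Suc i + 1..n}"
    show "(\<Sum>l=k..n. w (S k) (\<pi> l) * x' (\<pi> l)) = b (S k)"
    proof (cases "k = k0")
      case True
      have "(\<Sum>l=k0..n. w (S k0) (\<pi> l) * x' (\<pi> l)) = w (S k0) (\<pi> k0) * x' (\<pi> k0) + (\<Sum>l=Suc k0..n. w (S k0) (\<pi> l) * x' (\<pi> l))"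
        using k0 by (simp add: sum.atLeast_Suc_atMost)
      also have "(\<Sum>l=Suc k0..n. w (S k0) (\<pi> l) * x' (\<pi> l)) = (\<Sum>l=Suc k0..n. w (S k0) (\<pi> l) * x (\<pi> l))"
        using same by (intro sum.cong) auto
      also have "x' (\<pi> k0) = v" unfolding x'_def by simp
      finally show ?thesis using True wp unfolding v_def by (simp add: field_simps)
    next
      case False
      then have kk: "k \<in> {n - i + 1..n}" "Suc k0 \<le> k" using k Suc.prems unfolding k0_def by auto
      have "(\<Sum>l=k..n. w (S k) (\<pi> l) * x' (\<pi> l)) = (\<Sum>l=k..n. w (S k) (\<pi> l) * x (\<pi> l))"
        using same kk by (intro sum.cong) auto
      then show ?thesis using x kk by simp
    qed
  qed
qed

lemma E_ex: "\<exists>x. E x"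
proof -
  obtain x where x: "\<forall>k\<in>{n - n + 1..n}. (\<Sum>l=k..n. w (S k) (\<pi> l) * x (\<pi> l)) = b (S k)"
    using ex_part[of n] by auto
  define x' where "x' = (\<lambda>j. if j \<in> J then x j else 0)"
  have "(\<Sum>l=k..n. w (S k) (\<pi> l) * x' (\<pi> l)) = (\<Sum>l=k..n. w (S k) (\<pi> l) * x (\<pi> l))" if "k \<in> {1..n}" for k
    using that piJ unfolding x'_def by (intro sum.cong) auto
  then have "E x'" unfolding E_def using x by (auto simp: x'_def)
  then show ?thesis by blast
qed

lemma E_uniq: assumes "E x" "E y" shows "x = y"
proof -
  have "x (\<pi> k) = y (\<pi> k)" if "k \<in> {1..n}" for k
    using that
  proof (induction "n - k" arbitrary: k rule: less_induct)
    case less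
    have k: "1 \<le> k" "k \<le> n" using less.prems by auto
    have rest: "(\<Sum>l=Suc k..n. w (S k) (\<pi> l) * x (\<pi> l)) = (\<Sum>l=Suc k..n. w (S k) (\<pi> l) * y (\<pi> l))"
      by (intro sum.cong refl) (simp add: less.hyps k(1) diff_less_mono2 le_imp_less_Suc)
    have ex: "(\<Sum>l=k..n. w (S k) (\<pi> l) * x (\<pi> l)) = b (S k)" and ey: "(\<Sum>l=k..n. w (S k) (\<pi> l) * y (\<pi> l)) = b (S k)"
      using assms less.prems unfolding E_def by auto
    have "w (S k) (\<pi> k) * x (\<pi> k) + (\<Sum>l=Suc k..n. w (S k) (\<pi> l) * x (\<pi> l)) = b (S k)"
      "w (S k) (\<pi> k) * y (\<pi> k) + (\<Sum>l=Suc k..n. w (S k) (\<pi> l) * y (\<pi> l)) = b (S k)"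
      using ex ey k by (simp_all add: sum.atLeast_Suc_atMost)
    then have "w (S k) (\<pi> k) * x (\<pi> k) = w (S k) (\<pi> k) * y (\<pi> k)" using rest by linarith
    moreover have "0 < w (S k) (\<pi> k)" using wpos[OF k] S_insert[OF k] by auto
    ultimately show ?case by simp
  qed
  then have "x j = y j" if jJ: "j \<in> J" for j
  proof -
    have "j \<in> \<pi> ` {1..n}" using bij jJ by (simp add: bij_betw_def)
    then obtain k where "k \<in> {1..n}" "j = \<pi> k" by blast
    then show ?thesis using \<open>\<And>k. k \<in> {1..n} \<Longrightarrow> x (\<pi> k) = y (\<pi> k)\<close> by simp
  qed
  moreover have "x j = y j" if "j \<notin> J" for j using that assms unfolding E_def by auto
  ultimately show ?thesis by blast
qed

lemma E_xpi: "E (xpi J b w \<pi>)"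
proof -
  have "\<exists>!x. E x" using E_ex E_uniq by blast
  then have "E (THE x. E x)" by (rule theI')
  then show ?thesis unfolding xpi_def E_def by simp
qed

lemma A_xpi: "1 \<le> k \<Longrightarrow> k \<le> n \<Longrightarrow> A (xpi J b w \<pi>) k = b (S k)"
  using E_xpi A_alt unfolding E_def by auto

end

context P1 begin

abbreviation "nu \<equiv> AG2_nu J w c \<pi>"

lemma cx_abel: "1 \<le> n \<Longrightarrow> (\<Sum>j\<in>J. c j * x j) = nu 1 * A x 1 + (\<Sum>k=2..n. (nu k - nu (k - 1)) * A x k)"
proof -
  assume n: "1 \<le> n"
  then obtain p where p: "n = Suc p" by (cases n) auto
  have "(\<Sum>j\<in>J. c j * x j) = (\<Sum>k=1..n. nu k * (A x k - A x (Suc k)))"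
    using main_id[of n x] Sempty by simp
  also have "\<dots> = nu 1 * A x 1 + (\<Sum>k=2..n. (nu k - nu (k - 1)) * A x k) - nu n * A x (Suc n)"
    using abel[of nu "A x" p] p by simp
  also have "A x (Suc n) = 0" unfolding A_def using Sempty by simp
  finally show ?thesis by simp
qed

lemma nu_mono: "k \<in> {2..n} \<Longrightarrow> nu (k - 1) \<le> nu k"
proof -
  assume k: "k \<in> {2..n}"
  then have "k - 1 \<in> {1..<n}" by auto
  then have "nu (k - 1) \<le> nu (Suc (k - 1))" using adm unfolding admissible_run_def by blast
  then show ?thesis using k by simp
qed

lemma lower: assumes x: "x \<in> polyP J F b w" and n: "1 \<le> n"
  shows "nu 1 * b (S 1) + (\<Sum>k=2..n. (nu k - nu (k - 1)) * b (S k)) \<le> (\<Sum>j\<in>J. c j * x j)"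
proof -
  have A1: "A x 1 = b (S 1)" using x S1 unfolding polyP_def A_def by simp
  have Ak: "b (S k) \<le> A x k" if k: "k \<in> {2..n}" for k
  proof -
    have "S k \<in> F - {J}" using SF[of k] SnJ[of k] k by auto
    then show ?thesis using x unfolding polyP_def A_def by blast
  qed
  have "(\<Sum>k=2..n. (nu k - nu (k - 1)) * b (S k)) \<le> (\<Sum>k=2..n. (nu k - nu (k - 1)) * A x k)"
    by (intro sum_mono mult_left_mono Ak) (use nu_mono in auto)
  then show ?thesis using cx_abel[OF n, of x] A1 by simp
qed

lemma xpi_val: assumes n: "1 \<le> n"
  shows "(\<Sum>j\<in>J. c j * xpi J b w \<pi> j) = nu 1 * b (S 1) + (\<Sum>k=2..n. (nu k - nu (k - 1)) * b (S k))"
  using cx_abel[OF n, of "xpi J b w \<pi>"] A_xpi n by simp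

end

theorem proposition1:
  fixes J :: "'a set" and F :: "'a set set"
    and b :: "'a set \<Rightarrow> real" and w :: "'a set \<Rightarrow> 'a \<Rightarrow> real"
    and c :: "'a \<Rightarrow> real" and \<pi> :: "nat \<Rightarrow> 'a" and m :: nat
  assumes fam: "feasible_family J F"
    and b_nonneg: "\<And>S. S \<in> F \<Longrightarrow> 0 \<le> b S"
    and w_pos: "\<And>S j. S \<in> F \<Longrightarrow> j \<in> S \<Longrightarrow> 0 < w S j"
    and poly: "ext_polymatroid J F b w"
    and adm: "admissible_run J F w c \<pi>"
    and m: "1 \<le> m" "m \<le> card J - 1"
  shows "vLP J F b w c =
    (\<Sum>k=1..m. AG2_nu J w c \<pi> k * (b (Sk \<pi> (card J) k) - b (Sk \<pi> (card J) (Suc k))))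
    + (\<Sum>j\<in>Sk \<pi> (card J) (Suc m). redc w c \<pi> (card J) (Suc m) j * xpi J b w \<pi> j)"
proof -
  interpret P1 J F b w c \<pi> using fam w_pos adm by unfold_locales
  have n: "1 \<le> n" and mn: "Suc m \<le> n" using m by auto
  have fs: "full_string J F \<pi>" unfolding full_string_def using bij SF by auto
  then have xin: "xpi J b w \<pi> \<in> polyP J F b w" using poly unfolding ext_polymatroid_def by blast
  have "vLP J F b w c = (\<Sum>j\<in>J. c j * xpi J b w \<pi> j)"
    unfolding vLP_def
  proof (rule cInf_eq_minimum)
    show "(\<Sum>j\<in>J. c j * xpi J b w \<pi> j) \<in> (\<lambda>x. \<Sum>j\<in>J. c j * x j) ` polyP J F b w" using xin by blast
  next
    fix z assume "z \<in> (\<lambda>x. \<Sum>j\<in>J. c j * x j) ` polyP J F b w"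
    then obtain x where "x \<in> polyP J F b w" "z = (\<Sum>j\<in>J. c j * x j)" by blast
    then show "(\<Sum>j\<in>J. c j * xpi J b w \<pi> j) \<le> z" using lower[OF _ n] xpi_val[OF n] by simp
  qed
  also have "\<dots> = (\<Sum>k=1..m. nu k * (A (xpi J b w \<pi>) k - A (xpi J b w \<pi>) (Suc k)))
      + (\<Sum>j\<in>S (Suc m). redc w c \<pi> n (Suc m) j * xpi J b w \<pi> j)"
    using main_id[of m "xpi J b w \<pi>"] mn by (simp del: redc.simps)
  also have "(\<Sum>k=1..m. nu k * (A (xpi J b w \<pi>) k - A (xpi J b w \<pi>) (Suc k)))
      = (\<Sum>k=1..m. nu k * (b (S k) - b (S (Suc k))))"
    using mn by (intro sum.cong refl) (simp add: A_xpi)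
  finally show ?thesis .
qed


end
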